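(* Let $n$ and $m$ be integers with $n\geq 5$ and $m\geq 5$. For each $G\in T_{n,m}\setminus T_{n,m}^*$ there exists $H\in T_{n,m}^*$ that is $3$-stronger than $G$.
   Context: All graphs are finite, simple and undirected. A two-terminal graph is a graph $G$ together with two distinguished vertices $s,t$ (the terminals). $T_{n,m}$ denotes the set of all pairwise nonisomorphic (with isomorphisms preserving the set of terminals) two-terminal graphs with $n$ vertices and $m$ edges. Two vertices $u,v$ are true twins if $N[u]=N[v]$ (closed neighborhoods). For a positive integer $d$, a $d$-pathset of a two-terminal graph $G$ is a spanning subgraph of $G$ containing a path of length (number of edges) at most $d$ joining $s$ and $t$; $N_i^d(G)$ is the number of $d$-pathsets of $G$ with exactly $i$ edges. An edge $e$ of $G$ is $d$-irrelevant if for every $d$-pathset $H$ of $G$ containing $e$, $H-e$ is also a $d$-pathset. $T_{n,m}^*$ is the set of graphs in $T_{n,m}$ with no $3$-irrelevant edges whose terminals are true twins. For $G,H\in T_{n,m}$, $H$ is $d$-stronger than $G$ if $N_i^d(H)\geq N_i^d(G)$ for every $i\in\{1,\ldots,m\}$ and $N_j^d(H)>N_j^d(G)$ for some $j\in\{1,\ldots,m\}$. *)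

theory Defs
  imports Main
begin

definition tt_graph :: "nat \<Rightarrow> nat \<Rightarrow> nat set set \<Rightarrow> nat \<Rightarrow> nat \<Rightarrow> bool" where
  "tt_graph n m E s t \<longleftrightarrow>
     E \<subseteq> {e. \<exists>u v. e = {u, v} \<and> u \<noteq> v \<and> u < n \<and> v < n} \<and> card E = m \<and>
     s < n \<and> t < n \<and> s \<noteq> t"

definition is_path :: "nat set set \<Rightarrow> nat \<Rightarrow> nat \<Rightarrow> nat list \<Rightarrow> bool" where
  "is_path F s t vs \<longleftrightarrow> vs \<noteq> [] \<and> hd vs = s \<and> last vs = t \<and> distinct vs \<and>
     (\<forall>i. Suc i < length vs \<longrightarrow> {vs ! i, vs ! Suc i} \<in> F)"

text \<open>F (a spanning subgraph, given by its edge set) is a d-pathset.\<close>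
definition pathset :: "nat \<Rightarrow> nat set set \<Rightarrow> nat \<Rightarrow> nat \<Rightarrow> bool" where
  "pathset d F s t \<longleftrightarrow> (\<exists>vs. is_path F s t vs \<and> length vs - 1 \<le> d)"

definition Nid :: "nat \<Rightarrow> nat \<Rightarrow> nat set set \<Rightarrow> nat \<Rightarrow> nat \<Rightarrow> nat" where
  "Nid d i E s t = card {F. F \<subseteq> E \<and> card F = i \<and> pathset d F s t}"

definition irrelevant :: "nat \<Rightarrow> nat set set \<Rightarrow> nat \<Rightarrow> nat \<Rightarrow> nat set \<Rightarrow> bool" where
  "irrelevant d E s t e \<longleftrightarrow>
     (\<forall>F. F \<subseteq> E \<and> e \<in> F \<and> pathset d F s t \<longrightarrow> pathset d (F - {e}) s t)"

definition closed_nbhd :: "nat set set \<Rightarrow> nat \<Rightarrow> nat set" where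
  "closed_nbhd E u = insert u {v. {u, v} \<in> E}"

definition true_twins :: "nat set set \<Rightarrow> nat \<Rightarrow> nat \<Rightarrow> bool" where
  "true_twins E u v \<longleftrightarrow> closed_nbhd E u = closed_nbhd E v"

text \<open>Membership in T*_{n,m} (for a graph already in T_{n,m}).\<close>
definition in_Tstar :: "nat set set \<Rightarrow> nat \<Rightarrow> nat \<Rightarrow> bool" where
  "in_Tstar E s t \<longleftrightarrow> true_twins E s t \<and> (\<forall>e\<in>E. \<not> irrelevant 3 E s t e)"

text \<open>(E',s',t') is d-stronger than (E,s,t), both having m edges.\<close>
definition stronger :: "nat \<Rightarrow> nat \<Rightarrow> nat set set \<Rightarrow> nat \<Rightarrow> nat \<Rightarrow> nat set set \<Rightarrow> nat \<Rightarrow> nat \<Rightarrow> bool" where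
  "stronger d m E' s' t' E s t \<longleftrightarrow>
     (\<forall>i\<in>{1..m}. Nid d i E' s' t' \<ge> Nid d i E s t) \<and>
     (\<exists>j\<in>{1..m}. Nid d j E' s' t' > Nid d j E s t)"

end

theory Submission
  imports Defs
begin


definition P3 :: "nat set set \<Rightarrow> nat \<Rightarrow> nat \<Rightarrow> bool" where
"P3 F s t \<longleftrightarrow> {s,t} \<in> F \<or> (\<exists>x. x\<noteq>s \<and> x\<noteq>t \<and> {s,x}\<in>F \<and> {x,t}\<in>F) \<or>
   (\<exists>x y. x\<noteq>s \<and> x\<noteq>t \<and> y\<noteq>s \<and> y\<noteq>t \<and> x\<noteq>y \<and> {s,x}\<in>F \<and> {x,y}\<in>F \<and> {y,t}\<in>F)"

lemma pathset_P3:
  assumes "s \<noteq> t" shows "pathset 3 F s t \<longleftrightarrow> P3 F s t"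
proof
  assume "pathset 3 F s t"
  then obtain vs where p: "is_path F s t vs" and l: "length vs - 1 \<le> 3" unfolding pathset_def by blast
  have ne: "vs \<noteq> []" and h: "hd vs = s" and la: "last vs = t" and d: "distinct vs"
    and ed: "\<And>i. Suc i < length vs \<Longrightarrow> {vs ! i, vs ! Suc i} \<in> F"
    using p unfolding is_path_def by auto
  have "length vs = 1 \<or> length vs = 2 \<or> length vs = 3 \<or> length vs = 4" proof -
    have "length vs > 0" using ne by simp
    then show ?thesis using l by arith
  qed
  then show "P3 F s t"
  proof (elim disjE)
    assume "length vs = 1" then obtain a where "vs = [a]" by (auto simp: length_Suc_conv)
    then show ?thesis using h la assms by simp
  next
    assume L: "length vs = 2" then obtain a b where v: "vs = [a,b]" by (auto simp: length_Suc_conv numeral_eq_Suc)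
    have "{vs!0, vs!1} \<in> F" using ed[of 0] by (simp add: v)
    then show ?thesis using v h la unfolding P3_def by simp
  next
    assume L: "length vs = 3" then obtain a b c where v: "vs = [a,b,c]" by (auto simp: length_Suc_conv numeral_eq_Suc)
    have "{vs!0, vs!1} \<in> F" "{vs!1, vs!2} \<in> F" using ed[of 0] ed[of 1] by (simp_all add: v)
    then show ?thesis using v h la d unfolding P3_def by auto
  next
    assume L: "length vs = 4" then obtain a b c e where v: "vs = [a,b,c,e]" by (auto simp: length_Suc_conv numeral_eq_Suc)
    have "{vs!0, vs!1} \<in> F" "{vs!1, vs!2} \<in> F" "{vs!2, vs!3} \<in> F" using ed[of 0] ed[of 1] ed[of 2] by (simp_all add: v)
    then show ?thesis using v h la d unfolding P3_def by auto
  qed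
next
  assume "P3 F s t"
  then consider "{s,t} \<in> F" | x where "x\<noteq>s" "x\<noteq>t" "{s,x}\<in>F" "{x,t}\<in>F"
    | x y where "x\<noteq>s" "x\<noteq>t" "y\<noteq>s" "y\<noteq>t" "x\<noteq>y" "{s,x}\<in>F" "{x,y}\<in>F" "{y,t}\<in>F"
    unfolding P3_def by blast
  then show "pathset 3 F s t"
  proof cases
    case 1
    have "is_path F s t [s,t]" unfolding is_path_def using 1 assms by (auto simp: less_Suc_eq)
    then show ?thesis unfolding pathset_def by fastforce
  next
    case (2 x)
    have "is_path F s t [s,x,t]" unfolding is_path_def using 2 assms
      by (auto simp: less_Suc_eq nth_Cons split: nat.split)
    then show ?thesis unfolding pathset_def by fastforce
  next
    case (3 x y)
    have "is_path F s t [s,x,y,t]" unfolding is_path_def using 3 assms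
      by (auto simp: less_Suc_eq nth_Cons split: nat.split)
    then show ?thesis unfolding pathset_def by fastforce
  qed
qed



lemma P3_mono: "P3 F s t \<Longrightarrow> F \<subseteq> G \<Longrightarrow> P3 G s t"
  unfolding P3_def by blast

lemma P3_sym1: assumes "P3 F s t" shows "P3 F t s"
proof -
  from assms consider "{s,t}\<in>F" | x where "x\<noteq>s" "x\<noteq>t" "{s,x}\<in>F" "{x,t}\<in>F"
    | x y where "x\<noteq>s" "x\<noteq>t" "y\<noteq>s" "y\<noteq>t" "x\<noteq>y" "{s,x}\<in>F" "{x,y}\<in>F" "{y,t}\<in>F"
    unfolding P3_def by blast
  then show ?thesis
  proof cases
    case 1 then show ?thesis unfolding P3_def by (simp add: insert_commute)
  next
    case (2 x) then have "x\<noteq>t \<and> x\<noteq>s \<and> {t,x}\<in>F \<and> {x,s}\<in>F" by (simp add: insert_commute)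
    then show ?thesis unfolding P3_def by blast
  next
    case (3 x y) then have "y\<noteq>t \<and> y\<noteq>s \<and> x\<noteq>t \<and> x\<noteq>s \<and> y\<noteq>x \<and> {t,y}\<in>F \<and> {y,x}\<in>F \<and> {x,s}\<in>F"
      by (simp add: insert_commute)
    then show ?thesis unfolding P3_def by blast
  qed
qed

lemma P3_sym: "P3 F s t \<longleftrightarrow> P3 F t s"
  using P3_sym1 by blast

lemma noS: "\<forall>e\<in>F. s \<notin> e \<Longrightarrow> \<not> P3 F s t"
  unfolding P3_def by blast

lemma noT: "\<forall>e\<in>F. t \<notin> e \<Longrightarrow> \<not> P3 F s t"
  unfolding P3_def by blast

lemma P3_empty: "\<not> P3 {} s t"
  unfolding P3_def by blast

lemma P3_two: "s \<noteq> c1 \<Longrightarrow> s \<noteq> c2 \<Longrightarrow> t \<noteq> c1 \<Longrightarrow> t \<noteq> c2 \<Longrightarrow> c1 \<noteq> c2 \<Longrightarrow> s \<noteq> t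
   \<Longrightarrow> \<not> P3 {{s,c1},{c2,t}} s t"
proof -
  assume a: "s \<noteq> c1" "s \<noteq> c2" "t \<noteq> c1" "t \<noteq> c2" "c1 \<noteq> c2" "s \<noteq> t"
  let ?F = "{{s,c1},{c2,t}}"
  have 1: "{s,t} \<notin> ?F" using a by (auto simp: doubleton_eq_iff)
  have 2: "\<And>x. {s,x} \<in> ?F \<Longrightarrow> x = c1" using a by (auto simp: doubleton_eq_iff)
  have 3: "\<And>x. {x,t} \<in> ?F \<Longrightarrow> x = c2" using a by (auto simp: doubleton_eq_iff)
  have 4: "\<And>x y. {x,y} \<in> ?F \<Longrightarrow> x = s \<or> y = s \<or> x = t \<or> y = t" by (auto simp: doubleton_eq_iff)
  show ?thesis unfolding P3_def
  proof (intro notI, elim disjE exE conjE)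
    assume "{s,t} \<in> ?F" then show False using 1 by blast
  next
    fix x assume "{s,x} \<in> ?F" "{x,t} \<in> ?F" then show False using 2 3 a(5) by blast
  next
    fix x y assume "x \<noteq> s" "x \<noteq> t" "y \<noteq> s" "y \<noteq> t" "{x,y} \<in> ?F" then show False using 4 by blast
  qed
qed

lemma Nid_P3: "s \<noteq> t \<Longrightarrow> Nid 3 i E s t = card {F. F \<subseteq> E \<and> card F = i \<and> P3 F s t}"
  unfolding Nid_def using pathset_P3 by simp

lemma Nid_sym: "s \<noteq> t \<Longrightarrow> Nid 3 i E s t = Nid 3 i E t s"
  using Nid_P3[of s t] Nid_P3[of t s] P3_sym[of _ s t] by simp

lemma tt_sym: "tt_graph n m E s t \<Longrightarrow> tt_graph n m E t s"
  unfolding tt_graph_def by auto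

lemma tt_edge: "tt_graph n m E s t \<Longrightarrow> {a,b} \<in> E \<Longrightarrow> a < n \<and> b < n \<and> a \<noteq> b"
  unfolding tt_graph_def by (auto simp: doubleton_eq_iff)

lemma tt_fin: "tt_graph n m E s t \<Longrightarrow> m \<ge> 1 \<Longrightarrow> finite E"
  unfolding tt_graph_def using card.infinite by force

lemma tt_st: "tt_graph n m E s t \<Longrightarrow> s \<noteq> t \<and> s < n \<and> t < n"
  unfolding tt_graph_def by auto

lemma tt_edge_form: "tt_graph n m E s t \<Longrightarrow> e \<in> E \<Longrightarrow> \<exists>a b. e = {a,b} \<and> a \<noteq> b \<and> a < n \<and> b < n"
  unfolding tt_graph_def by auto

definition weak :: "nat \<Rightarrow> nat set set \<Rightarrow> nat set set \<Rightarrow> nat \<Rightarrow> nat \<Rightarrow> bool" where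
  "weak m E1 E s t \<longleftrightarrow> (\<forall>i\<in>{1..m}. Nid 3 i E s t \<le> Nid 3 i E1 s t)"

lemma stronger_trans: assumes h2: "stronger 3 m E2 s t E1 s t" and h1: "stronger 3 m E1 s t E s t"
  shows "stronger 3 m E2 s t E s t"
proof -
  have a: "\<forall>i\<in>{1..m}. Nid 3 i E s t \<le> Nid 3 i E2 s t"
    using h1 h2 unfolding stronger_def by (blast intro: order_trans)
  from h1 obtain j where j: "j \<in> {1..m}" "Nid 3 j E s t < Nid 3 j E1 s t" unfolding stronger_def by blast
  have "Nid 3 j E1 s t \<le> Nid 3 j E2 s t" using h2 j(1) unfolding stronger_def by blast
  then have "Nid 3 j E s t < Nid 3 j E2 s t" using j(2) by linarith
  then show ?thesis using a j(1) unfolding stronger_def by blast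
qed

lemma stronger_weak: assumes h2: "stronger 3 m E2 s t E1 s t" and h1: "weak m E1 E s t"
  shows "stronger 3 m E2 s t E s t"
proof -
  have a: "\<forall>i\<in>{1..m}. Nid 3 i E s t \<le> Nid 3 i E2 s t"
    using h1 h2 unfolding stronger_def weak_def by (blast intro: order_trans)
  from h2 obtain j where j: "j \<in> {1..m}" "Nid 3 j E1 s t < Nid 3 j E2 s t" unfolding stronger_def by blast
  have "Nid 3 j E s t \<le> Nid 3 j E1 s t" using h1 j(1) unfolding weak_def by blast
  then have "Nid 3 j E s t < Nid 3 j E2 s t" using j(2) by linarith
  then show ?thesis using a j(1) unfolding stronger_def by blast
qed

lemma stronger_sym: "s \<noteq> t \<Longrightarrow> stronger 3 m E1 t s E t s \<Longrightarrow> stronger 3 m E1 s t E s t"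
  unfolding stronger_def using Nid_sym[of s t] by simp

lemma CMP:
  assumes st: "s \<noteq> t" and fin: "finite E1"
    and H: "\<And>F. F \<subseteq> E \<Longrightarrow> P3 F s t \<Longrightarrow> \<Phi> F \<subseteq> E1 \<and> card (\<Phi> F) = card F \<and> P3 (\<Phi> F) s t"
    and inj: "inj_on \<Phi> {F. F \<subseteq> E \<and> P3 F s t}"
  shows "Nid 3 i E s t \<le> Nid 3 i E1 s t"
proof -
  define A where "A = {F. F \<subseteq> E \<and> card F = i \<and> P3 F s t}"
  define B where "B = {F. F \<subseteq> E1 \<and> card F = i \<and> P3 F s t}"
  have "inj_on \<Phi> A" using inj unfolding A_def by (rule inj_on_subset) blast
  moreover have "\<Phi> ` A \<subseteq> B"
  proof (rule image_subsetI)
    fix F assume "F \<in> A"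
    then have "F \<subseteq> E" "card F = i" "P3 F s t" unfolding A_def by auto
    then show "\<Phi> F \<in> B" using H[of F] unfolding B_def by simp
  qed
  moreover have "B \<subseteq> Pow E1" unfolding B_def by blast
  then have "finite B" using fin finite_subset by blast
  ultimately have "card A \<le> card B" by (intro card_inj_on_le)
  then show ?thesis using Nid_P3[OF st] unfolding A_def B_def by simp
qed

lemma CMPs:
  assumes st: "s \<noteq> t" and fin: "finite E1"
    and H: "\<And>F. F \<subseteq> E \<Longrightarrow> P3 F s t \<Longrightarrow> \<Phi> F \<subseteq> E1 \<and> card (\<Phi> F) = card F \<and> P3 (\<Phi> F) s t"
    and inj: "inj_on \<Phi> {F. F \<subseteq> E \<and> P3 F s t}"
    and z: "z \<subseteq> E1" "P3 z s t" "z \<notin> \<Phi> ` {F. F \<subseteq> E \<and> P3 F s t}"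
  shows "Nid 3 (card z) E s t < Nid 3 (card z) E1 s t"
proof -
  define A where "A = {F. F \<subseteq> E \<and> card F = card z \<and> P3 F s t}"
  define B where "B = {F. F \<subseteq> E1 \<and> card F = card z \<and> P3 F s t}"
  have "inj_on \<Phi> A" using inj unfolding A_def by (rule inj_on_subset) blast
  moreover have "\<Phi> ` A \<subseteq> B - {z}"
  proof (rule image_subsetI)
    fix F assume "F \<in> A"
    then have F: "F \<subseteq> E" "card F = card z" "P3 F s t" unfolding A_def by auto
    then have "\<Phi> F \<noteq> z" using z(3) by blast
    then show "\<Phi> F \<in> B - {z}" using H[of F] F unfolding B_def by simp
  qed
  moreover have "B \<subseteq> Pow E1" unfolding B_def by blast
  then have fB: "finite B" using fin finite_subset by blast
  ultimately have "card A \<le> card (B - {z})" by (intro card_inj_on_le) auto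
  moreover have "z \<in> B" using z unfolding B_def by blast
  then have "card (B - {z}) < card B" by (meson card_Diff1_less fB)
  ultimately have "card A < card B" by linarith
  then show ?thesis using Nid_P3[OF st] unfolding A_def B_def by simp
qed



lemma tt_replace:
  assumes tt: "tt_graph n m E s t" and fin: "finite E" and e: "e \<in> E" and fE: "f \<notin> E"
    and f: "f = {x,y}" "x \<noteq> y" "x < n" "y < n"
  shows "tt_graph n m (insert f (E - {e})) s t"
proof -
  have "card E > 0" using fin e card_gt_0_iff by blast
  then have "card (insert f (E - {e})) = card E" using fin e fE by (simp add: card_insert_disjoint)
  then show ?thesis using tt f unfolding tt_graph_def by blast
qed

lemma psi_inj:
  assumes fE: "f \<notin> E"
  shows "inj_on (\<lambda>F. if e \<in> F then insert f (F - {e}) else F) (Pow E)"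
proof (rule inj_onI)
  fix F G assume F: "F \<in> Pow E" and G: "G \<in> Pow E"
    and eq: "(if e \<in> F then insert f (F - {e}) else F) = (if e \<in> G then insert f (G - {e}) else G)"
  have fF: "f \<notin> F" and fG: "f \<notin> G" using F G fE by auto
  show "F = G"
  proof (cases "e \<in> F")
    case True
    show ?thesis
    proof (cases "e \<in> G")
      case True
      with \<open>e \<in> F\<close> eq have "insert f (F - {e}) = insert f (G - {e})" by simp
      then have "F - {e} = G - {e}" using fF fG by (metis Diff_iff insert_ident)
      then show ?thesis using \<open>e \<in> F\<close> True by (metis insert_Diff)
    next
      case False
      with \<open>e \<in> F\<close> eq have "insert f (F - {e}) = G" by simp
      then show ?thesis using fG by blast
    qed
  next
    case False
    show ?thesis
    proof (cases "e \<in> G")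
      case True
      with False eq have "F = insert f (G - {e})" by simp
      then show ?thesis using fF by blast
    next
      case False
      with \<open>e \<notin> F\<close> eq show ?thesis by simp
    qed
  qed
qed

lemma RL:
  assumes tt: "tt_graph n m E s t" and fin: "finite E" and e: "e \<in> E" and fE: "f \<notin> E"
    and f: "f = {x,y}" "x \<noteq> y" "x < n" "y < n"
    and cond: "\<And>F. F \<subseteq> E \<Longrightarrow> e \<in> F \<Longrightarrow> P3 F s t \<Longrightarrow> P3 (insert f (F - {e})) s t"
  shows "tt_graph n m (insert f (E - {e})) s t \<and> weak m (insert f (E - {e})) E s t"
proof -
  define \<psi> where "\<psi> = (\<lambda>F. if e \<in> F then insert f (F - {e}) else F)"
  have st: "s \<noteq> t" using tt_st[OF tt] by simp
  have fin1: "finite (insert f (E - {e}))" using fin by simp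
  have H: "\<psi> F \<subseteq> insert f (E - {e}) \<and> card (\<psi> F) = card F \<and> P3 (\<psi> F) s t"
    if "F \<subseteq> E" "P3 F s t" for F
  proof (cases "e \<in> F")
    case True
    have "finite F" using that(1) fin finite_subset by blast
    then have "card (insert f (F - {e})) = card F" using True that(1) fE
      by (subst card_insert_disjoint) (auto simp: card_Diff_singleton intro: Suc_pred card_gt_0_iff[THEN iffD2])
    then show ?thesis using True that cond unfolding \<psi>_def by auto
  next
    case False
    then show ?thesis using that unfolding \<psi>_def by auto
  qed
  have inj: "inj_on \<psi> {F. F \<subseteq> E \<and> P3 F s t}"
    using psi_inj[OF fE, of e] unfolding \<psi>_def by (rule inj_on_subset) blast
  have "Nid 3 i E s t \<le> Nid 3 i (insert f (E - {e})) s t" for i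
    by (rule CMP[OF st fin1 H inj]) auto
  then show ?thesis using tt_replace[OF tt fin e fE f] unfolding weak_def by blast
qed

lemma RLs:
  assumes tt: "tt_graph n m E s t" and fin: "finite E" and e: "e \<in> E" and fE: "f \<notin> E"
    and f: "f = {x,y}" "x \<noteq> y" "x < n" "y < n"
    and cond: "\<And>F. F \<subseteq> E \<Longrightarrow> e \<in> F \<Longrightarrow> P3 F s t \<Longrightarrow> P3 (insert f (F - {e})) s t"
    and F0: "F0 \<subseteq> E" "e \<in> F0" "\<not> P3 F0 s t" "P3 (insert f (F0 - {e})) s t"
  shows "tt_graph n m (insert f (E - {e})) s t \<and> stronger 3 m (insert f (E - {e})) s t E s t"
proof -
  define \<psi> where "\<psi> = (\<lambda>F. if e \<in> F then insert f (F - {e}) else F)"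
  have st: "s \<noteq> t" using tt_st[OF tt] by simp
  have fin1: "finite (insert f (E - {e}))" using fin by simp
  have H: "\<psi> F \<subseteq> insert f (E - {e}) \<and> card (\<psi> F) = card F \<and> P3 (\<psi> F) s t"
    if "F \<subseteq> E" "P3 F s t" for F
  proof (cases "e \<in> F")
    case True
    have "finite F" using that(1) fin finite_subset by blast
    then have "card (insert f (F - {e})) = card F" using True that(1) fE
      by (subst card_insert_disjoint) (auto simp: card_Diff_singleton intro: Suc_pred card_gt_0_iff[THEN iffD2])
    then show ?thesis using True that cond unfolding \<psi>_def by auto
  next
    case False
    then show ?thesis using that unfolding \<psi>_def by auto
  qed
  have inj0: "inj_on \<psi> (Pow E)" using psi_inj[OF fE, of e] unfolding \<psi>_def .
  have inj: "inj_on \<psi> {F. F \<subseteq> E \<and> P3 F s t}"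
    using inj0 by (rule inj_on_subset) blast
  have w: "Nid 3 i E s t \<le> Nid 3 i (insert f (E - {e})) s t" for i
    by (rule CMP[OF st fin1 H inj]) auto
  define z where "z = insert f (F0 - {e})"
  have z1: "z \<subseteq> insert f (E - {e})" using F0 unfolding z_def by blast
  have z2: "P3 z s t" using F0 unfolding z_def by simp
  have z3: "z \<notin> \<psi> ` {F. F \<subseteq> E \<and> P3 F s t}"
  proof
    assume "z \<in> \<psi> ` {F. F \<subseteq> E \<and> P3 F s t}"
    then obtain F where F: "F \<subseteq> E" "P3 F s t" "z = \<psi> F" by blast
    have "\<psi> F0 = z" using F0 unfolding \<psi>_def z_def by simp
    then have "F = F0" using inj0 F F0 by (metis PowI inj_on_eq_iff)
    then show False using F F0 by simp
  qed
  have sl: "Nid 3 (card z) E s t < Nid 3 (card z) (insert f (E - {e})) s t"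
    by (rule CMPs[OF st fin1 H inj z1 z2 z3]) auto
  have tt1: "tt_graph n m (insert f (E - {e})) s t" using tt_replace[OF tt fin e fE f] .
  have "finite z" using z1 fin1 finite_subset by blast
  then have "card z \<ge> 1" unfolding z_def by (simp add: card_gt_0_iff Suc_le_eq)
  moreover have "card z \<le> m" using card_mono[OF fin1 z1] tt1 unfolding tt_graph_def by simp
  ultimately show ?thesis using tt1 w sl unfolding stronger_def by auto
qed



definition AB :: "nat set set \<Rightarrow> nat \<Rightarrow> nat \<Rightarrow> nat \<Rightarrow> nat \<Rightarrow> bool" where
  "AB Y s t c1 c2 \<longleftrightarrow> ({s,c1}\<in>Y \<and> {c2,t}\<in>Y) \<or> ({s,c2}\<in>Y \<and> {c1,t}\<in>Y)"

lemma P3_cases: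
  assumes "P3 F s t"
  obtains "{s,t} \<in> F" | x where "x\<noteq>s" "x\<noteq>t" "{s,x}\<in>F" "{x,t}\<in>F"
    | x y where "x\<noteq>s" "x\<noteq>t" "y\<noteq>s" "y\<noteq>t" "x\<noteq>y" "{s,x}\<in>F" "{x,y}\<in>F" "{y,t}\<in>F"
  using assms unfolding P3_def by blast

lemma P3_I1: "{s,t} \<in> F \<Longrightarrow> P3 F s t" unfolding P3_def by blast
lemma P3_I2: "x\<noteq>s \<Longrightarrow> x\<noteq>t \<Longrightarrow> {s,x}\<in>F \<Longrightarrow> {x,t}\<in>F \<Longrightarrow> P3 F s t" unfolding P3_def by blast
lemma P3_I3: "x\<noteq>s \<Longrightarrow> x\<noteq>t \<Longrightarrow> y\<noteq>s \<Longrightarrow> y\<noteq>t \<Longrightarrow> x\<noteq>y \<Longrightarrow> {s,x}\<in>F \<Longrightarrow> {x,y}\<in>F \<Longrightarrow> {y,t}\<in>F \<Longrightarrow> P3 F s t"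
  unfolding P3_def by blast

lemma dbl_ne: "u \<in> A \<Longrightarrow> u \<notin> B \<Longrightarrow> A \<noteq> B" by blast
lemma dbl_ne2: "u \<in> B \<Longrightarrow> u \<notin> A \<Longrightarrow> A \<noteq> B" by blast

context
  fixes n m :: nat and E :: "nat set set" and s t v c1 c2 :: nat
  assumes tt: "tt_graph n m E s t" and fin: "finite E"
    and aE: "{c1,c2} \<in> E" and bE: "{s,v} \<in> E"
    and d: "s \<noteq> v" "t \<noteq> v" "c1 \<noteq> c2" "c1 \<noteq> s" "c1 \<noteq> t" "c1 \<noteq> v" "c2 \<noteq> s" "c2 \<noteq> t" "c2 \<noteq> v"
    and vonly: "\<And>e. e \<in> E \<Longrightarrow> v \<in> e \<Longrightarrow> e = {s,v}"
begin

lemma st: "s \<noteq> t" using tt_st[OF tt] by simp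

lemma tvE: "{t,v} \<notin> E"
proof
  assume "{t,v} \<in> E" then have "{t,v} = {s,v}" using vonly by blast
  then show False using st d by (auto simp: doubleton_eq_iff)
qed

lemma K1:
  assumes F: "F \<subseteq> E" and P: "P3 F s t"
  shows "P3 (F - {{c1,c2},{s,v}}) s t \<or> ({c1,c2} \<in> F \<and> AB (F - {{c1,c2},{s,v}}) s t c1 c2)"
proof -
  let ?a = "{c1,c2}" and ?b = "{s,v}"
  let ?F0 = "F - {?a,?b}"
  have tedge: "\<And>x. {x,t} \<in> F \<Longrightarrow> {x,t} \<in> ?F0"
  proof -
    fix x assume "{x,t} \<in> F"
    moreover have "{x,t} \<noteq> ?a" by (rule dbl_ne[of t]) (use d in auto)
    moreover have "{x,t} \<noteq> ?b" by (rule dbl_ne[of t]) (use d st in auto)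
    ultimately show "{x,t} \<in> ?F0" by blast
  qed
  have vt: "\<And>y. y \<noteq> s \<Longrightarrow> {v,y} \<notin> F"
  proof
    fix y assume "y \<noteq> s" "{v,y} \<in> F"
    then have "{v,y} = ?b" using vonly F by blast
    then show False using \<open>y \<noteq> s\<close> d by (auto simp: doubleton_eq_iff)
  qed
  have sedge: "\<And>x. x \<noteq> v \<Longrightarrow> {s,x} \<in> F \<Longrightarrow> {s,x} \<in> ?F0"
  proof -
    fix x assume "x \<noteq> v" "{s,x} \<in> F"
    moreover have "{s,x} \<noteq> ?a" by (rule dbl_ne[of s]) (use d in auto)
    moreover have "{s,x} \<noteq> ?b" using \<open>x \<noteq> v\<close> d by (auto simp: doubleton_eq_iff)
    ultimately show "{s,x} \<in> ?F0" by blast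
  qed
  from P show ?thesis
  proof (cases rule: P3_cases)
    case 1
    moreover have "{s,t} \<noteq> ?a" by (rule dbl_ne[of s]) (use d in auto)
    moreover have "{s,t} \<noteq> ?b" by (rule dbl_ne[of t]) (use d st in auto)
    ultimately have "{s,t} \<in> ?F0" by simp
    then show ?thesis by (intro disjI1 P3_I1)
  next
    case (2 x)
    have "x \<noteq> v"
    proof
      assume "x = v" then have "{v,t} \<in> F" using 2 by simp
      then show False using vt[of t] st by blast
    qed
    then have h1: "{s,x} \<in> ?F0" using 2(3) by (rule sedge)
    have h2: "{x,t} \<in> ?F0" using 2(4) by (rule tedge)
    show ?thesis using P3_I2[OF 2(1) 2(2) h1 h2] by (rule disjI1)
  next
    case (3 x y)
    have "x \<noteq> v"
    proof
      assume "x = v" then have "{v,y} \<in> F" using 3(7) by simp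
      then show False using vt[of y] 3(3) by simp
    qed
    then have sx: "{s,x} \<in> ?F0" using 3(6) by (rule sedge)
    have yt: "{y,t} \<in> ?F0" using 3(8) by (rule tedge)
    show ?thesis
    proof (cases "{x,y} = ?a")
      case True
      then have "(x = c1 \<and> y = c2) \<or> (x = c2 \<and> y = c1)" by (simp add: doubleton_eq_iff)
      then have "AB ?F0 s t c1 c2" using sx yt unfolding AB_def by (elim disjE) simp_all
      moreover have "{c1,c2} \<in> F" using True 3(7) by simp
      ultimately show ?thesis by simp
    next
      case False
      moreover have "{x,y} \<noteq> ?b" by (rule dbl_ne2[of s]) (use 3 in auto)
      ultimately have "{x,y} \<in> ?F0" using 3(7) by simp
      then show ?thesis using P3_I3[OF 3(1-5) sx _ yt] by simp
    qed
  qed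
qed

lemma K2: "\<not> P3 Y s t \<Longrightarrow> {s,c1} \<in> Y \<Longrightarrow> {c1,t} \<notin> Y"
  using P3_I2[of c1 s t Y] d by blast

lemma K3: "{s,v} \<in> Y \<Longrightarrow> {t,v} \<in> Y \<Longrightarrow> P3 Y s t"
  using P3_I2[of v s t Y] d by (simp add: insert_commute)

lemma card_swap1: "finite F \<Longrightarrow> a \<in> F \<Longrightarrow> z \<notin> F \<Longrightarrow> card (insert z (F - {a})) = card F"
  by (metis card_Diff1_less card_Suc_Diff1 card_insert_disjoint finite_Diff DiffD1)

lemma card_swap2: "finite F \<Longrightarrow> a \<in> F \<Longrightarrow> x \<in> F \<Longrightarrow> a \<noteq> x \<Longrightarrow> z1 \<notin> F \<Longrightarrow> z2 \<notin> F \<Longrightarrow> z1 \<noteq> z2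
   \<Longrightarrow> card (insert z1 (insert z2 (F - {a, x}))) = card F"
proof -
  assume h: "finite F" "a \<in> F" "x \<in> F" "a \<noteq> x" "z1 \<notin> F" "z2 \<notin> F" "z1 \<noteq> z2"
  have "card (F - {a,x}) = card F - 2" using h by (simp add: card_Diff_subset)
  moreover have "card F \<ge> 2" using h card_mono[of F "{a,x}"] by simp
  ultimately show ?thesis using h by (simp add: card_insert_disjoint)
qed

lemma LX:
  shows "tt_graph n m (insert {t,v} (E - {{c1,c2}})) s t \<and> stronger 3 m (insert {t,v} (E - {{c1,c2}})) s t E s t"
proof -
  define a where "a = {c1,c2}"
  define b where "b = {s,v}"
  define tv where "tv = {t,v}"
  define xx where "xx F = (if {s,c1} \<in> F then {c2,t} else {c1,t})" for F :: "nat set set"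
  define F0 where "F0 F = F - {a,b}" for F :: "nat set set"
  define \<Phi> where "\<Phi> F = (if a \<notin> F then F else if P3 (F0 F) s t \<or> b \<in> F then insert tv (F - {a})
      else insert b (insert tv (F - {a, xx F})))" for F
  define E1 where "E1 = insert tv (E - {a})"
  have ds: "v \<noteq> s" "v \<noteq> t" "c2 \<noteq> c1" "s \<noteq> c1" "t \<noteq> c1" "v \<noteq> c1" "s \<noteq> c2" "t \<noteq> c2" "v \<noteq> c2" "t \<noteq> s"
    using d st by auto
  have ab: "a \<noteq> b" unfolding a_def b_def by (rule dbl_ne2[of s]) (use d in auto)
  have atv: "a \<noteq> tv" unfolding a_def tv_def by (rule dbl_ne2[of t]) (use d in auto)
  have btv: "b \<noteq> tv" unfolding b_def tv_def by (rule dbl_ne2[of t]) (use d st in auto)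
  have tvE': "tv \<notin> E" unfolding tv_def by (rule tvE)
  have aE': "a \<in> E" unfolding a_def by (rule aE)
  have bE': "b \<in> E" unfolding b_def by (rule bE)
  have xxa: "xx F \<noteq> a" for F unfolding xx_def a_def by (cases "{s,c1} \<in> F") (simp_all add: doubleton_eq_iff d ds)
  have xxb: "xx F \<noteq> b" for F unfolding xx_def b_def
    by (cases "{s,c1} \<in> F") (simp_all add: doubleton_eq_iff d ds st)
  have xxtv: "xx F \<noteq> tv" for F unfolding xx_def tv_def
    by (cases "{s,c1} \<in> F") (simp_all add: doubleton_eq_iff d ds)
  have s1x: "{s,c1} \<noteq> xx F" for F unfolding xx_def
    by (cases "{s,c1} \<in> F") (simp_all add: doubleton_eq_iff d ds st)
  have s1a: "{s,c1} \<noteq> a" unfolding a_def by (rule dbl_ne[of s]) (use d in auto)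
  have s1b: "{s,c1} \<noteq> b" unfolding b_def by (simp add: doubleton_eq_iff d ds)
  have tvF: "F \<subseteq> E \<Longrightarrow> tv \<notin> F" for F using tvE' by blast
  have AB0: "\<not> AB {} s t c1 c2" unfolding AB_def by simp
  have c3facts: "xx F \<in> F0 F \<and> \<not> AB (F0 F - {xx F}) s t c1 c2"
    if F: "F \<subseteq> E" "P3 F s t" "a \<in> F" "\<not> P3 (F0 F) s t" "b \<notin> F" for F
  proof -
    have "AB (F0 F) s t c1 c2" using K1[OF F(1,2)] F(4) unfolding F0_def a_def b_def by simp
    show ?thesis
    proof (cases "{s,c1} \<in> F")
      case True
      then have i: "{s,c1} \<in> F0 F" unfolding F0_def using s1a s1b by simp
      then have "{c1,t} \<notin> F0 F" using K2 F(4) by blast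
      then have "{c2,t} \<in> F0 F" using \<open>AB (F0 F) s t c1 c2\<close> unfolding AB_def by blast
      moreover have "\<not> AB (F0 F - {{c2,t}}) s t c1 c2"
        using \<open>{c1,t} \<notin> F0 F\<close> unfolding AB_def by simp
      ultimately show ?thesis using True unfolding xx_def by simp
    next
      case False
      then have "{s,c1} \<notin> F0 F" unfolding F0_def by simp
      then have "{c1,t} \<in> F0 F" using \<open>AB (F0 F) s t c1 c2\<close> unfolding AB_def by blast
      moreover have "\<not> AB (F0 F - {{c1,t}}) s t c1 c2"
        using \<open>{s,c1} \<notin> F0 F\<close> unfolding AB_def by simp
      ultimately show ?thesis using False unfolding xx_def by simp
    qed
  qed
  have K1': "P3 (F0 F) s t \<or> (a \<in> F \<and> AB (F0 F) s t c1 c2)" if "F \<subseteq> E" "P3 F s t" for F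
    using K1[OF that] unfolding F0_def a_def b_def by simp
  have F0sub: "F0 F \<subseteq> F" for F unfolding F0_def by blast
  have H: "\<Phi> F \<subseteq> E1 \<and> card (\<Phi> F) = card F \<and> P3 (\<Phi> F) s t" if F: "F \<subseteq> E" "P3 F s t" for F
  proof -
    have finF: "finite F" using F(1) fin finite_subset by blast
    consider (c1) "a \<notin> F" | (c2) "a \<in> F" "P3 (F0 F) s t \<or> b \<in> F" | (c3) "a \<in> F" "\<not> P3 (F0 F) s t" "b \<notin> F"
      by blast
    then show ?thesis
    proof cases
      case c1
      then have "\<Phi> F = F" unfolding \<Phi>_def by simp
      moreover have "F \<subseteq> E1" using F(1) c1 unfolding E1_def by blast
      ultimately show ?thesis using F(2) by simp
    next
      case c2
      then have eq: "\<Phi> F = insert tv (F - {a})" unfolding \<Phi>_def by simp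
      have "insert tv (F - {a}) \<subseteq> E1" using F(1) unfolding E1_def by blast
      moreover have "card (insert tv (F - {a})) = card F" using card_swap1[OF finF c2(1) tvF[OF F(1)]] .
      moreover have "P3 (insert tv (F - {a})) s t"
      proof (cases "P3 (F0 F) s t")
        case True
        moreover have "F0 F \<subseteq> insert tv (F - {a})" unfolding F0_def by blast
        ultimately show ?thesis by (rule P3_mono)
      next
        case False
        then have "b \<in> F" using c2 by simp
        then have "{s,v} \<in> insert tv (F - {a})" using ab unfolding b_def by simp
        moreover have "{t,v} \<in> insert tv (F - {a})" unfolding tv_def by simp
        ultimately show ?thesis by (rule K3)
      qed
      ultimately show ?thesis using eq by simp
    next
      case c3
      then have eq: "\<Phi> F = insert b (insert tv (F - {a, xx F}))" unfolding \<Phi>_def by simp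
      have xF: "xx F \<in> F" using c3facts[OF F c3] F0sub by blast
      have "insert b (insert tv (F - {a, xx F})) \<subseteq> E1" using F(1) bE' ab unfolding E1_def by blast
      moreover have "card (insert b (insert tv (F - {a, xx F}))) = card F"
        by (rule card_swap2[OF finF c3(1) xF xxa[symmetric] c3(3) tvF[OF F(1)] btv])
      moreover have "P3 (insert b (insert tv (F - {a, xx F}))) s t"
        by (rule K3) (simp_all add: b_def tv_def)
      ultimately show ?thesis using eq by simp
    qed
  qed
  have tvPhi: "tv \<in> \<Phi> F \<longleftrightarrow> a \<in> F" if "F \<subseteq> E" for F
    using tvF[OF that] unfolding \<Phi>_def by auto
  have R2: "\<Phi> F - {b,tv} = F0 F" if "F \<subseteq> E" "a \<in> F" "P3 (F0 F) s t \<or> b \<in> F" for F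
    using that tvF[OF that(1)] unfolding \<Phi>_def F0_def by auto
  have R3: "\<Phi> F - {b,tv} = F0 F - {xx F}" if "F \<subseteq> E" "a \<in> F" "\<not> P3 (F0 F) s t" "b \<notin> F" for F
    using that tvF[OF that(1)] unfolding \<Phi>_def F0_def by auto
  have R3': "\<not> P3 (F0 F - {xx F}) s t \<and> \<not> AB (F0 F - {xx F}) s t c1 c2"
    if "F \<subseteq> E" "P3 F s t" "a \<in> F" "\<not> P3 (F0 F) s t" "b \<notin> F" for F
    using c3facts[OF that] that(4) P3_mono[of "F0 F - {xx F}" s t "F0 F"] by blast
  have R2': "P3 (F0 F) s t \<or> AB (F0 F) s t c1 c2" if "F \<subseteq> E" "P3 F s t" for F
    using K1'[OF that] by blast
  have Frec: "F = insert a (F0 F)" if "a \<in> F" "b \<notin> F" for F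
    using that unfolding F0_def by blast
  have inj: "inj_on \<Phi> {F. F \<subseteq> E \<and> P3 F s t}"
  proof (rule inj_onI)
    fix F G assume "F \<in> {F. F \<subseteq> E \<and> P3 F s t}" "G \<in> {F. F \<subseteq> E \<and> P3 F s t}" and eq: "\<Phi> F = \<Phi> G"
    then have F: "F \<subseteq> E" "P3 F s t" and G: "G \<subseteq> E" "P3 G s t" by auto
    have aa: "a \<in> F \<longleftrightarrow> a \<in> G" using tvPhi[OF F(1)] tvPhi[OF G(1)] eq by simp
    show "F = G"
    proof (cases "a \<in> F")
      case False
      then show ?thesis using eq aa unfolding \<Phi>_def by simp
    next
      case True
      then have aG: "a \<in> G" using aa by simp
      show ?thesis
      proof (cases "P3 (F0 F) s t \<or> b \<in> F")
        case cF: True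
        show ?thesis
        proof (cases "P3 (F0 G) s t \<or> b \<in> G")
          case True
          then have "insert tv (F - {a}) = insert tv (G - {a})" using eq cF \<open>a \<in> F\<close> aG unfolding \<Phi>_def by simp
          then have "F - {a} = G - {a}" using tvF[OF F(1)] tvF[OF G(1)] by (metis Diff_iff insert_ident)
          then show ?thesis using \<open>a \<in> F\<close> aG by (metis insert_Diff)
        next
          case False
          then have "F0 F = F0 G - {xx G}" using R2[OF F(1) \<open>a \<in> F\<close> cF] R3[OF G(1) aG] eq by simp
          then show ?thesis using R2'[OF F] R3'[OF G aG] False by simp
        qed
      next
        case cF: False
        show ?thesis
        proof (cases "P3 (F0 G) s t \<or> b \<in> G")
          case True
          then have "F0 G = F0 F - {xx F}" using R2[OF G(1) aG True] R3[OF F(1) \<open>a \<in> F\<close>] cF eq by simp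
          then show ?thesis using R2'[OF G] R3'[OF F \<open>a \<in> F\<close>] cF by simp
        next
          case cG: False
          have e3: "F0 F - {xx F} = F0 G - {xx G}" using R3[OF F(1) \<open>a \<in> F\<close>] R3[OF G(1) aG] cF cG eq by simp
          have m1: "{s,c1} \<in> F \<longleftrightarrow> {s,c1} \<in> F0 F - {xx F}" for F
            unfolding F0_def using s1a s1b s1x by simp
          have "xx F = xx G" using m1[of F] m1[of G] e3 unfolding xx_def by simp
          moreover have "xx F \<in> F0 F" "xx G \<in> F0 G" using c3facts[OF F] c3facts[OF G] \<open>a \<in> F\<close> aG cF cG by auto
          ultimately have "F0 F = F0 G" using e3 by (metis insert_Diff)
          then show ?thesis using Frec[of F] Frec[of G] \<open>a \<in> F\<close> aG cF cG by metis
        qed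
      qed
    qed
  qed
  define z where "z = {b, tv}"
  have z1: "z \<subseteq> E1" unfolding z_def E1_def using bE' ab by blast
  have z2: "P3 z s t" unfolding z_def b_def tv_def by (rule K3) simp_all
  have ne1: "{s,c1} \<noteq> {c2,t}" "{s,c2} \<noteq> {c1,t}" by (simp_all add: doubleton_eq_iff ds d)
  have z3: "z \<notin> \<Phi> ` {F. F \<subseteq> E \<and> P3 F s t}"
  proof
    assume "z \<in> \<Phi> ` {F. F \<subseteq> E \<and> P3 F s t}"
    then obtain F where F: "F \<subseteq> E" "P3 F s t" and zF: "\<Phi> F = z" by blast
    have tvn: "tv \<notin> F" using tvF[OF F(1)] .
    consider (c1) "a \<notin> F" | (c2) "a \<in> F" "P3 (F0 F) s t \<or> b \<in> F" | (c3) "a \<in> F" "\<not> P3 (F0 F) s t" "b \<notin> F"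
      by blast
    then show False
    proof cases
      case c1
      then have "F = z" using zF unfolding \<Phi>_def by simp
      then show False using tvn unfolding z_def by simp
    next
      case c2
      then have "F0 F = {}" using R2[OF F(1) c2] zF unfolding z_def by simp
      then show False using R2'[OF F] P3_empty AB0 by simp
    next
      case c3
      then have "F0 F - {xx F} = {}" using R3[OF F(1) c3(1-3)] zF unfolding z_def by simp
      then have "F0 F \<subseteq> {xx F}" by blast
      moreover have "AB (F0 F) s t c1 c2" using R2'[OF F] c3 by simp
      ultimately show False unfolding AB_def using ne1 by blast
    qed
  qed
  have fin1: "finite E1" unfolding E1_def using fin by simp
  have w: "Nid 3 i E s t \<le> Nid 3 i E1 s t" for i
    by (rule CMP[OF st fin1 H inj]) auto
  have sl: "Nid 3 (card z) E s t < Nid 3 (card z) E1 s t"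
    by (rule CMPs[OF st fin1 H inj z1 z2 z3]) auto
  have vn: "v < n" "t < n" using tt_edge[OF tt bE] tt_st[OF tt] by auto
  have tt1: "tt_graph n m E1 s t" unfolding E1_def tv_def
    by (rule tt_replace[OF tt fin aE' tvE'[unfolded tv_def] refl ds(2)[symmetric] vn(2) vn(1)]) 
  have "card z = 2" unfolding z_def using btv by simp
  moreover have "card z \<le> m" using card_mono[OF fin1 z1] tt1 unfolding tt_graph_def by simp
  ultimately show ?thesis using tt1 w sl unfolding stronger_def E1_def tv_def a_def
    by (metis atLeastAtMost_iff one_le_numeral)
qed

end


lemma card4: "card {a,b,c,d::'a} \<le> 4"
  by (auto simp: card_insert_if)

lemma pair3: "a \<in> {s,t,c} \<Longrightarrow> b \<in> {s,t,c} \<Longrightarrow> a \<noteq> b \<Longrightarrow> {a,b} \<in> {{s,t},{s,c},{t,c::'a}}"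
  by (auto simp: insert_commute)

lemma P3_single: "s \<noteq> t \<Longrightarrow> P3 {e} s t \<Longrightarrow> e = {s,t}"
proof -
  assume st: "s \<noteq> t" and P: "P3 {e} s t"
  from P show ?thesis
  proof (cases rule: P3_cases)
    case 1 then show ?thesis by simp
  next
    case (2 x)
    then have "{s,x} = {x,t}" by simp
    then show ?thesis using 2 st by (simp add: doubleton_eq_iff)
  next
    case (3 x y)
    then have "{s,x} = {y,t}" by simp
    then show ?thesis using 3 st by (simp add: doubleton_eq_iff)
  qed
qed

lemma C2a:
  assumes tt: "tt_graph n m E s t" and fin: "finite E"
    and sv: "{s,v} \<in> E" and tv: "{t,v} \<notin> E" and vb: "{v,b} \<in> E" and bt: "{b,t} \<in> E" and bs: "b \<noteq> s"
    and vt: "v \<noteq> t"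
  shows "\<exists>E1. tt_graph n m E1 s t \<and> stronger 3 m E1 s t E s t"
proof -
  have st: "s \<noteq> t" using tt_st[OF tt] by simp
  have vs: "v \<noteq> s" and vn: "v < n" using tt_edge[OF tt sv] by auto
  have bv: "b \<noteq> v" using tt_edge[OF tt vb] by auto
  have btt: "b \<noteq> t" using tt_edge[OF tt bt] by auto
  have tn: "t < n" using tt_st[OF tt] by simp
  have fE: "{v,t} \<notin> E" using tv by (simp add: insert_commute)
  have cond: "P3 (insert {v,t} (F - {{v,b}})) s t" if F: "F \<subseteq> E" "{v,b} \<in> F" "P3 F s t" for F
  proof -
    let ?G = "insert {v,t} (F - {{v,b}})"
    have memb: "\<And>u. u \<in> F \<Longrightarrow> u \<noteq> {v,b} \<Longrightarrow> u \<in> ?G" by simp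
    have sne: "\<And>x. {s,x} \<noteq> {v,b}" by (rule dbl_ne[of s]) (use vs bs in auto)
    have tne: "\<And>x. {x,t} \<noteq> {v,b}" by (rule dbl_ne[of t]) (use vt btt in auto)
    from F(3) show ?thesis
    proof (cases rule: P3_cases)
      case 1
      have "{s,t} \<noteq> {v,b}" by (rule dbl_ne[of s]) (use vs bs in auto)
      then show ?thesis using memb[OF 1] by (intro P3_I1)
    next
      case (2 x)
      show ?thesis using P3_I2[OF 2(1,2) memb[OF 2(3) sne] memb[OF 2(4) tne]] .
    next
      case (3 x y)
      show ?thesis
      proof (cases "{x,y} = {v,b}")
        case True
        then have "(x = v \<and> y = b) \<or> (x = b \<and> y = v)" by (simp add: doubleton_eq_iff)
        then show ?thesis
        proof
          assume "x = v \<and> y = b"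
          then have "{s,v} \<in> ?G" using memb[OF 3(6) sne] by simp
          moreover have "{v,t} \<in> ?G" by simp
          ultimately show ?thesis by (rule P3_I2[OF vs vt])
        next
          assume "x = b \<and> y = v"
          then have "{v,t} \<in> E" using 3(8) F(1) by auto
          then show ?thesis using fE by simp
        qed
      next
        case False
        show ?thesis using P3_I3[OF 3(1-5) memb[OF 3(6) sne] memb[OF 3(7) False] memb[OF 3(8) tne]] .
      qed
    qed
  qed
  have F01: "{{s,v},{v,b}} \<subseteq> E" using sv vb by simp
  have F02: "{v,b} \<in> {{s,v},{v,b}}" by simp
  have F03: "\<not> P3 {{s,v},{v,b}} s t" by (rule noT) (use st vt btt in auto)
  have svb: "{s,v} \<noteq> {v,b}" using bs by (simp add: doubleton_eq_iff)
  have F04: "P3 (insert {v,t} ({{s,v},{v,b}} - {{v,b}})) s t"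
    by (rule P3_I2[OF vs vt]) (use svb in auto)
  show ?thesis using RLs[OF tt fin vb fE refl vt vn tn cond F01 F02 F03 F04] by blast
qed

lemma RLis:
  assumes tt: "tt_graph n m E s t" and fin: "finite E" and e: "e \<in> E" and fE: "f \<notin> E"
    and f: "f = {x,y}" "x \<noteq> y" "x < n" "y < n"
    and irr: "\<And>F. F \<subseteq> E \<Longrightarrow> P3 F s t \<Longrightarrow> P3 (F - {e}) s t"
    and F0: "F0 \<subseteq> E" "e \<in> F0" "\<not> P3 (F0 - {e}) s t" "P3 (insert f (F0 - {e})) s t"
  shows "\<exists>E1. tt_graph n m E1 s t \<and> stronger 3 m E1 s t E s t"
proof -
  have cond: "P3 (insert f (F - {e})) s t" if "F \<subseteq> E" "e \<in> F" "P3 F s t" for F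
    using P3_mono[OF irr[OF that(1,3)]] by blast
  have "\<not> P3 F0 s t" using irr[OF F0(1)] F0(3) by blast
  then show ?thesis using RLs[OF tt fin e fE f cond F0(1,2) _ F0(4)] by blast
qed

lemma RLi:
  assumes tt: "tt_graph n m E s t" and fin: "finite E" and e: "e \<in> E" and fE: "f \<notin> E"
    and f: "f = {x,y}" "x \<noteq> y" "x < n" "y < n"
    and irr: "\<And>F. F \<subseteq> E \<Longrightarrow> P3 F s t \<Longrightarrow> P3 (F - {e}) s t"
  shows "tt_graph n m (insert f (E - {e})) s t \<and> weak m (insert f (E - {e})) E s t"
proof -
  have cond: "P3 (insert f (F - {e})) s t" if "F \<subseteq> E" "e \<in> F" "P3 F s t" for F
    using P3_mono[OF irr[OF that(1,3)]] by blast
  show ?thesis using RL[OF tt fin e fE f cond] by blast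
qed

lemma IRRsv:
  assumes tt: "tt_graph n m E s t" and sv: "{s,v} \<in> E" and tv: "{t,v} \<notin> E" and vt: "v \<noteq> t"
    and no2a: "\<And>b. {v,b} \<in> E \<Longrightarrow> {b,t} \<in> E \<Longrightarrow> b = s"
    and F: "F \<subseteq> E" "P3 F s t"
  shows "P3 (F - {{s,v}}) s t"
proof -
  have st: "s \<noteq> t" using tt_st[OF tt] by simp
  have vs: "v \<noteq> s" using tt_edge[OF tt sv] by auto
  have memb: "\<And>u. u \<in> F \<Longrightarrow> u \<noteq> {s,v} \<Longrightarrow> u \<in> F - {{s,v}}" by simp
  have tne: "\<And>x. {x,t} \<noteq> {s,v}" by (rule dbl_ne[of t]) (use vt st in auto)
  from F(2) show ?thesis
  proof (cases rule: P3_cases)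
    case 1
    have "{s,t} \<noteq> {s,v}" using vt by (simp add: doubleton_eq_iff)
    then show ?thesis using memb[OF 1] by (intro P3_I1)
  next
    case (2 x)
    have "x \<noteq> v"
    proof
      assume "x = v" then have "{t,v} \<in> E" using 2(4) F(1) by (auto simp: insert_commute)
      then show False using tv by simp
    qed
    then have "{s,x} \<noteq> {s,v}" by (simp add: doubleton_eq_iff)
    then show ?thesis using P3_I2[OF 2(1,2) memb[OF 2(3)] memb[OF 2(4) tne]] by simp
  next
    case (3 x y)
    have "x \<noteq> v"
    proof
      assume "x = v" then have "{v,y} \<in> E" "{y,t} \<in> E" using 3(7,8) F(1) by auto
      then have "y = s" by (rule no2a)
      then show False using 3(3) by simp
    qed
    then have "{s,x} \<noteq> {s,v}" by (simp add: doubleton_eq_iff)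
    moreover have "{x,y} \<noteq> {s,v}" by (rule dbl_ne2[of s]) (use 3 in auto)
    ultimately show ?thesis using P3_I3[OF 3(1-5) memb[OF 3(6)] memb[OF 3(7)] memb[OF 3(8) tne]] by simp
  qed
qed

lemma C2b_i:
  assumes tt: "tt_graph n m E s t" and fin: "finite E" and sv: "{s,v} \<in> E" and tv: "{t,v} \<notin> E" and vt: "v \<noteq> t"
    and no2a: "\<And>b. {v,b} \<in> E \<Longrightarrow> {b,t} \<in> E \<Longrightarrow> b = s"
    and x: "{s,x} \<in> E" "x \<noteq> v" "x \<noteq> t" "{t,x} \<notin> E"
  shows "\<exists>E1. tt_graph n m E1 s t \<and> stronger 3 m E1 s t E s t"
proof -
  have st: "s \<noteq> t" and tn: "t < n" using tt_st[OF tt] by auto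
  have xs: "x \<noteq> s" and xn: "x < n" using tt_edge[OF tt x(1)] by auto
  have fE: "{x,t} \<notin> E" using x(4) by (simp add: insert_commute)
  have ne: "{s,x} \<noteq> {s,v}" using x(2) by (simp add: doubleton_eq_iff)
  have e1: "{{s,x},{s,v}} - {{s,v}} = {{s,x}}" using ne by auto
  have F01: "{{s,x},{s,v}} \<subseteq> E" using x(1) sv by simp
  have F03: "\<not> P3 ({{s,x},{s,v}} - {{s,v}}) s t" unfolding e1 by (rule noT) (use x(3) st in auto)
  have F04: "P3 (insert {x,t} ({{s,x},{s,v}} - {{s,v}})) s t" unfolding e1 by (rule P3_I2[OF xs x(3)]) auto
  show ?thesis by (rule RLis[OF tt fin sv fE refl x(3) xn tn IRRsv[OF tt sv tv vt no2a] F01 _ F03 F04]) auto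
qed

lemma C2b_ii:
  assumes tt: "tt_graph n m E s t" and fin: "finite E" and sv: "{s,v} \<in> E" and tv: "{t,v} \<notin> E" and vt: "v \<noteq> t"
    and no2a: "\<And>b. {v,b} \<in> E \<Longrightarrow> {b,t} \<in> E \<Longrightarrow> b = s"
    and x: "{t,x} \<in> E" "x \<noteq> s" "{s,x} \<notin> E"
  shows "\<exists>E1. tt_graph n m E1 s t \<and> stronger 3 m E1 s t E s t"
proof -
  have st: "s \<noteq> t" and sn: "s < n" using tt_st[OF tt] by auto
  have xt: "x \<noteq> t" and xn: "x < n" using tt_edge[OF tt x(1)] by auto
  have ne: "{t,x} \<noteq> {s,v}" by (rule dbl_ne[of t]) (use st vt in auto)
  have e1: "{{t,x},{s,v}} - {{s,v}} = {{t,x}}" using ne by auto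
  have F01: "{{t,x},{s,v}} \<subseteq> E" using x(1) sv by simp
  have F03: "\<not> P3 ({{t,x},{s,v}} - {{s,v}}) s t" unfolding e1 by (rule noS) (use x(2) st in auto)
  have F04: "P3 (insert {s,x} ({{t,x},{s,v}} - {{s,v}})) s t" unfolding e1
    by (rule P3_I2[OF x(2) xt]) (auto simp: insert_commute)
  show ?thesis by (rule RLis[OF tt fin sv x(3) refl x(2)[symmetric] sn xn IRRsv[OF tt sv tv vt no2a] F01 _ F03 F04]) auto
qed

lemma C2b_iii:
  assumes tt: "tt_graph n m E s t" and fin: "finite E" and sv: "{s,v} \<in> E" and tv: "{t,v} \<notin> E" and vt: "v \<noteq> t"
    and no2a: "\<And>b. {v,b} \<in> E \<Longrightarrow> {b,t} \<in> E \<Longrightarrow> b = s"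
    and c: "c1 \<noteq> c2" "c1 \<noteq> s" "c1 \<noteq> t" "c2 \<noteq> s" "c2 \<noteq> t" "{s,c1} \<in> E" "{t,c1} \<in> E" "{s,c2} \<in> E" "{t,c2} \<in> E"
      "{c1,c2} \<notin> E"
  shows "\<exists>E1. tt_graph n m E1 s t \<and> stronger 3 m E1 s t E s t"
proof -
  have st: "s \<noteq> t" using tt_st[OF tt] by auto
  have c1n: "c1 < n" using tt_edge[OF tt c(6)] by auto
  have c2n: "c2 < n" using tt_edge[OF tt c(8)] by auto
  have c1v: "c1 \<noteq> v" using c(7) tv by auto
  have ne1: "{s,c1} \<noteq> {s,v}" using c1v by (simp add: doubleton_eq_iff)
  have ne2: "{c2,t} \<noteq> {s,v}" by (rule dbl_ne[of t]) (use st vt in auto)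
  have e1: "{{s,c1},{c2,t},{s,v}} - {{s,v}} = {{s,c1},{c2,t}}" using ne1 ne2 by auto
  have F01: "{{s,c1},{c2,t},{s,v}} \<subseteq> E" using c(6,9) sv by (simp add: insert_commute)
  have F03: "\<not> P3 ({{s,c1},{c2,t},{s,v}} - {{s,v}}) s t" unfolding e1
    by (rule P3_two) (use c st in auto)
  have F04: "P3 (insert {c1,c2} ({{s,c1},{c2,t},{s,v}} - {{s,v}})) s t" unfolding e1
    by (rule P3_I3[OF c(2,3,4,5,1)]) auto
  show ?thesis by (rule RLis[OF tt fin sv c(10) refl c(1) c1n c2n IRRsv[OF tt sv tv vt no2a] F01 _ F03 F04]) auto
qed

lemma C2b_iv:
  assumes tt: "tt_graph n m E s t" and fin: "finite E" and m5: "m \<ge> 5"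
    and sv: "{s,v} \<in> E" and tv: "{t,v} \<notin> E" and vt: "v \<noteq> t"
    and no2a: "\<And>b. {v,b} \<in> E \<Longrightarrow> {b,t} \<in> E \<Longrightarrow> b = s"
    and noi: "\<And>x. {s,x} \<in> E \<Longrightarrow> x \<noteq> v \<Longrightarrow> x \<noteq> t \<Longrightarrow> {t,x} \<in> E"
    and noii: "\<And>x. {t,x} \<in> E \<Longrightarrow> x \<noteq> s \<Longrightarrow> {s,x} \<in> E"
    and noiii: "\<And>c1 c2. c1 \<noteq> c2 \<Longrightarrow> c1 \<noteq> s \<Longrightarrow> c1 \<noteq> t \<Longrightarrow> c2 \<noteq> s \<Longrightarrow> c2 \<noteq> t \<Longrightarrow>
       {s,c1} \<in> E \<Longrightarrow> {t,c1} \<in> E \<Longrightarrow> {s,c2} \<in> E \<Longrightarrow> {t,c2} \<in> E \<Longrightarrow> {c1,c2} \<in> E"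
  shows "\<exists>E1. tt_graph n m E1 s t \<and> stronger 3 m E1 s t E s t"
proof -
  have st: "s \<noteq> t" and tn: "t < n" using tt_st[OF tt] by auto
  have vs: "v \<noteq> s" and vn: "v < n" using tt_edge[OF tt sv] by auto
  define inK where "inK u \<longleftrightarrow> u = s \<or> u = t \<or> ({s,u} \<in> E \<and> {t,u} \<in> E)" for u
  define inside where "inside e \<longleftrightarrow> (\<exists>a b. e = {a,b} \<and> inK a \<and> inK b)" for e
  have irr: "P3 (F - {e}) s t" if e: "\<not> inside e" and F: "F \<subseteq> E" "P3 F s t" for e F
  proof -
    have memb: "\<And>a b. {a,b} \<in> F \<Longrightarrow> inK a \<Longrightarrow> inK b \<Longrightarrow> {a,b} \<in> F - {e}"
      using e unfolding inside_def by blast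
    have Ks: "inK s" and Kt: "inK t" unfolding inK_def by auto
    from F(2) show ?thesis
    proof (cases rule: P3_cases)
      case 1 then show ?thesis using memb[OF 1 Ks Kt] by (intro P3_I1)
    next
      case (2 x)
      have "{t,x} \<in> E" using 2(4) F(1) by (auto simp: insert_commute)
      moreover then have "{s,x} \<in> E" using noii 2(1) by blast
      ultimately have Kx: "inK x" unfolding inK_def by blast
      show ?thesis using P3_I2[OF 2(1,2) memb[OF 2(3) Ks Kx] memb[OF 2(4) Kx Kt]] .
    next
      case (3 x y)
      have "{t,y} \<in> E" using 3(8) F(1) by (auto simp: insert_commute)
      moreover then have "{s,y} \<in> E" using noii 3(3) by blast
      ultimately have Ky: "inK y" unfolding inK_def by blast
      have "x \<noteq> v"
      proof
        assume "x = v" then have "{v,y} \<in> E" "{y,t} \<in> E" using 3(7,8) F(1) by auto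
        then have "y = s" by (rule no2a)
        then show False using 3(3) by simp
      qed
      then have "{t,x} \<in> E" using noi[of x] 3(2,6) F(1) by blast
      then have Kx: "inK x" using 3(6) F(1) unfolding inK_def by blast
      show ?thesis using P3_I3[OF 3(1-5) memb[OF 3(6) Ks Kx] memb[OF 3(7) Kx Ky] memb[OF 3(8) Ky Kt]] .
    qed
  qed
  show ?thesis
  proof (cases "\<exists>e\<in>E. e \<noteq> {s,v} \<and> \<not> inside e")
    case True
    then obtain e where e: "e \<in> E" "e \<noteq> {s,v}" "\<not> inside e" by blast
    have e1: "{{s,v}, e} - {e} = {{s,v}}" using e(2) by auto
    have F01: "{{s,v}, e} \<subseteq> E" using sv e(1) by simp
    have F03: "\<not> P3 ({{s,v}, e} - {e}) s t" unfolding e1 by (rule noT) (use st vt in auto)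
    have F04: "P3 (insert {t,v} ({{s,v}, e} - {e})) s t" unfolding e1
      by (rule P3_I2[OF vs vt]) (auto simp: insert_commute)
    show ?thesis by (rule RLis[OF tt fin e(1) tv refl vt[symmetric] tn vn irr[OF e(3)] F01 _ F03 F04]) auto
  next
    case False
    then have allin: "\<And>e. e \<in> E \<Longrightarrow> e = {s,v} \<or> inside e" by blast
    define inK' where "inK' c \<longleftrightarrow> c \<noteq> s \<and> c \<noteq> t \<and> {s,c} \<in> E \<and> {t,c} \<in> E" for c
    show ?thesis
    proof (cases "\<exists>c1 c2. c1 \<noteq> c2 \<and> inK' c1 \<and> inK' c2")
      case True
      then obtain c1 c2 where c: "c1 \<noteq> c2" "inK' c1" "inK' c2" by blast
      then have cc: "c1 \<noteq> s" "c1 \<noteq> t" "{s,c1} \<in> E" "{t,c1} \<in> E" "c2 \<noteq> s" "c2 \<noteq> t" "{s,c2} \<in> E" "{t,c2} \<in> E"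
        unfolding inK'_def by auto
      have aE: "{c1,c2} \<in> E" using noiii[OF c(1) cc(1,2,5,6,3,4,7,8)] .
      have c1v: "c1 \<noteq> v" using cc(4) tv by auto
      have c2v: "c2 \<noteq> v" using cc(8) tv by auto
      have vonly: "e = {s,v}" if "e \<in> E" "v \<in> e" for e
      proof (rule ccontr)
        assume "e \<noteq> {s,v}"
        then have "inside e" using allin that(1) by blast
        then obtain a b where ab: "e = {a,b}" "inK a" "inK b" unfolding inside_def by blast
        then have "inK v" using that(2) by auto
        then show False unfolding inK_def using vs vt tv by auto
      qed
      have "tt_graph n m (insert {t,v} (E - {{c1,c2}})) s t \<and> stronger 3 m (insert {t,v} (E - {{c1,c2}})) s t E s t"
        by (rule LX[OF tt fin aE sv vs[symmetric] vt[symmetric] c(1) cc(1,2) c1v cc(5,6) c2v vonly])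
      then show ?thesis by blast
    next
      case False
      obtain c where c: "\<And>c'. inK' c' \<Longrightarrow> c' = c" using False by blast
      have "E \<subseteq> {{s,v},{s,t},{s,c},{t,c}}"
      proof
        fix e assume eE: "e \<in> E"
        show "e \<in> {{s,v},{s,t},{s,c},{t,c}}"
        proof (cases "e = {s,v}")
          case True then show ?thesis by simp
        next
          case False
          then have "inside e" using allin eE by blast
          then obtain a b where ab: "e = {a,b}" "inK a" "inK b" unfolding inside_def by blast
          have "a \<noteq> b" using tt_edge[OF tt] eE ab(1) by blast
          have "a \<in> {s,t,c}" using ab(2) c[of a] unfolding inK_def inK'_def by auto
          moreover have "b \<in> {s,t,c}" using ab(3) c[of b] unfolding inK_def inK'_def by auto
          ultimately have "{a,b} \<in> {{s,t},{s,c},{t,c}}" using pair3 \<open>a \<noteq> b\<close> by blast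
          then show ?thesis using ab(1) by blast
        qed
      qed
      then have "card E \<le> 4" using card_mono[of "{{s,v},{s,t},{s,c},{t,c}}" E] card4[of "{s,v}" "{s,t}" "{s,c}" "{t,c}"]
        by simp
      moreover have "card E = m" using tt unfolding tt_graph_def by simp
      ultimately show ?thesis using m5 by simp
    qed
  qed
qed

lemma C2:
  assumes tt: "tt_graph n m E s t" and fin: "finite E" and m5: "m \<ge> 5"
    and sv: "{s,v} \<in> E" and tv: "{t,v} \<notin> E" and vt: "v \<noteq> t"
  shows "\<exists>E1. tt_graph n m E1 s t \<and> stronger 3 m E1 s t E s t"
proof (cases "\<exists>b. {v,b} \<in> E \<and> {b,t} \<in> E \<and> b \<noteq> s")
  case True
  then obtain b where "{v,b} \<in> E" "{b,t} \<in> E" "b \<noteq> s" by blast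
  then show ?thesis using C2a[OF tt fin sv tv] vt by blast
next
  case False
  then have no2a: "\<And>b. {v,b} \<in> E \<Longrightarrow> {b,t} \<in> E \<Longrightarrow> b = s" by blast
  show ?thesis
  proof (cases "\<exists>x. {s,x} \<in> E \<and> x \<noteq> v \<and> x \<noteq> t \<and> {t,x} \<notin> E")
    case True
    then obtain x where "{s,x} \<in> E" "x \<noteq> v" "x \<noteq> t" "{t,x} \<notin> E" by blast
    then show ?thesis using C2b_i[OF tt fin sv tv vt no2a] by blast
  next
    case F1: False
    show ?thesis
    proof (cases "\<exists>x. {t,x} \<in> E \<and> x \<noteq> s \<and> {s,x} \<notin> E")
      case True
      then obtain x where "{t,x} \<in> E" "x \<noteq> s" "{s,x} \<notin> E" by blast
      then show ?thesis using C2b_ii[OF tt fin sv tv vt no2a] by blast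
    next
      case F2: False
      show ?thesis
      proof (cases "\<exists>c1 c2. c1 \<noteq> c2 \<and> c1 \<noteq> s \<and> c1 \<noteq> t \<and> c2 \<noteq> s \<and> c2 \<noteq> t \<and> {s,c1} \<in> E \<and> {t,c1} \<in> E
          \<and> {s,c2} \<in> E \<and> {t,c2} \<in> E \<and> {c1,c2} \<notin> E")
        case True
        then obtain c1 c2 where "c1 \<noteq> c2" "c1 \<noteq> s" "c1 \<noteq> t" "c2 \<noteq> s" "c2 \<noteq> t" "{s,c1} \<in> E" "{t,c1} \<in> E"
          "{s,c2} \<in> E" "{t,c2} \<in> E" "{c1,c2} \<notin> E" by blast
        then show ?thesis using C2b_iii[OF tt fin sv tv vt no2a] by blast
      next
        case F3: False
        show ?thesis
        proof (rule C2b_iv[OF tt fin m5 sv tv vt no2a])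
          show "\<And>x. {s,x} \<in> E \<Longrightarrow> x \<noteq> v \<Longrightarrow> x \<noteq> t \<Longrightarrow> {t,x} \<in> E" using F1 by blast
          show "\<And>x. {t,x} \<in> E \<Longrightarrow> x \<noteq> s \<Longrightarrow> {s,x} \<in> E" using F2 by blast
          show "\<And>c1 c2. c1 \<noteq> c2 \<Longrightarrow> c1 \<noteq> s \<Longrightarrow> c1 \<noteq> t \<Longrightarrow> c2 \<noteq> s \<Longrightarrow> c2 \<noteq> t \<Longrightarrow>
            {s,c1} \<in> E \<Longrightarrow> {t,c1} \<in> E \<Longrightarrow> {s,c2} \<in> E \<Longrightarrow> {t,c2} \<in> E \<Longrightarrow> {c1,c2} \<in> E"
            using F3 by blast
        qed
      qed
    qed
  qed
qed

lemma C2sym: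
  assumes tt: "tt_graph n m E s t" and fin: "finite E" and m5: "m \<ge> 5"
    and tv: "{t,v} \<in> E" and sv: "{s,v} \<notin> E" and vs: "v \<noteq> s"
  shows "\<exists>E1. tt_graph n m E1 s t \<and> stronger 3 m E1 s t E s t"
proof -
  have st: "s \<noteq> t" using tt_st[OF tt] by simp
  obtain E1 where "tt_graph n m E1 t s" "stronger 3 m E1 t s E t s"
    using C2[OF tt_sym[OF tt] fin m5 tv sv vs] by blast
  then show ?thesis using tt_sym stronger_sym[OF st] by blast
qed



lemma C3:
  assumes tt: "tt_graph n m E s t" and fin: "finite E" and m5: "m \<ge> 5"
    and stE: "{s,t} \<in> E"
    and tw: "\<And>v. v \<noteq> s \<Longrightarrow> v \<noteq> t \<Longrightarrow> {s,v} \<in> E \<longleftrightarrow> {t,v} \<in> E"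
    and e: "e \<in> E" and irr: "\<And>F. F \<subseteq> E \<Longrightarrow> P3 F s t \<Longrightarrow> P3 (F - {e}) s t"
  shows "\<exists>E1. tt_graph n m E1 s t \<and> stronger 3 m E1 s t E s t"
proof -
  have st: "s \<noteq> t" and sn: "s < n" using tt_st[OF tt] by auto
  obtain a b where ab: "e = {a,b}" "a \<noteq> b" "a < n" "b < n" using tt_edge_form[OF tt e] by blast
  have "\<exists>w\<in>{a,b}. w \<noteq> s \<and> w \<noteq> t \<and> {s,w} \<notin> E"
  proof (rule ccontr)
    assume "\<not> ?thesis"
    then have hw: "\<And>w. w \<in> {a,b} \<Longrightarrow> w = s \<or> w = t \<or> {s,w} \<in> E" by blast
    have key: "\<exists>F. F \<subseteq> E \<and> P3 F s t \<and> \<not> P3 (F - {e}) s t"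
    proof (cases "s \<in> {a,b}")
      case sin: True
      then obtain y where y: "e = {s,y}" using ab(1) by blast
      have ys: "y \<noteq> s" using ab y by (auto simp: doubleton_eq_iff)
      show ?thesis
      proof (cases "y = t")
        case True
        then have "P3 {e} s t" using y by (simp add: P3_I1)
        moreover have "\<not> P3 ({e} - {e}) s t" using P3_empty by simp
        ultimately show ?thesis using e by blast
      next
        case False
        have "{t,y} \<in> E" using tw[OF ys False] e y by simp
        then have "{y,t} \<in> E" by (simp add: insert_commute)
        let ?F = "{{s,y},{y,t}}"
        have "?F \<subseteq> E" using e y \<open>{y,t} \<in> E\<close> by simp
        moreover have "P3 ?F s t" by (rule P3_I2[OF ys False]) simp_all
        moreover have "?F - {e} = {{y,t}}" using y False st by (auto simp: doubleton_eq_iff)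
        moreover have "\<not> P3 {{y,t}} s t" by (rule noS) (use ys st in auto)
        ultimately show ?thesis by metis
      qed
    next
      case snot: False
      show ?thesis
      proof (cases "t \<in> {a,b}")
        case True
        then obtain y where y: "e = {y,t}" using ab(1) by blast
        have yt: "y \<noteq> t" using ab y by (auto simp: doubleton_eq_iff)
        have ys: "y \<noteq> s" using snot y ab(1) by auto
        have "{s,y} \<in> E" using hw[of y] y ab(1) ys yt by auto
        let ?F = "{{s,y},{y,t}}"
        have "?F \<subseteq> E" using e y \<open>{s,y} \<in> E\<close> by simp
        moreover have "P3 ?F s t" by (rule P3_I2[OF ys yt]) simp_all
        moreover have "?F - {e} = {{s,y}}" using y ys st by (auto simp: doubleton_eq_iff)
        moreover have "\<not> P3 {{s,y}} s t" by (rule noT) (use yt st in auto)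
        ultimately show ?thesis by metis
      next
        case tnot: False
        have as: "a \<noteq> s" "b \<noteq> s" "a \<noteq> t" "b \<noteq> t" using snot tnot by auto
        have "{s,a} \<in> E" "{s,b} \<in> E" using hw[of a] hw[of b] as by auto
        then have "{t,b} \<in> E" using tw[OF as(2) as(4)] by simp
        then have bt: "{b,t} \<in> E" by (simp add: insert_commute)
        let ?F = "{{s,a},{a,b},{b,t}}"
        have "?F \<subseteq> E" using e ab(1) \<open>{s,a} \<in> E\<close> bt by simp
        moreover have "P3 ?F s t" by (rule P3_I3[OF as(1,3,2,4) ab(2)]) simp_all
        moreover have "?F - {e} = {{s,a},{b,t}}" using ab(1) as by (auto simp: doubleton_eq_iff)
        moreover have "\<not> P3 {{s,a},{b,t}} s t" by (rule P3_two) (use as ab st in auto)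
        ultimately show ?thesis by metis
      qed
    qed
    then show False using irr by blast
  qed
  then obtain w where w: "w \<in> {a,b}" "w \<noteq> s" "w \<noteq> t" "{s,w} \<notin> E" by blast
  have wn: "w < n" using w(1) ab by auto
  have W: "tt_graph n m (insert {s,w} (E - {e})) s t \<and> weak m (insert {s,w} (E - {e})) E s t"
    by (rule RLi[OF tt fin e w(4) refl w(2)[symmetric] sn wn irr])
  let ?E1 = "insert {s,w} (E - {e})"
  have tw1: "{t,w} \<notin> ?E1"
  proof -
    have "{t,w} \<notin> E" using tw[OF w(2,3)] w(4) by simp
    moreover have "{t,w} \<noteq> {s,w}" using st w by (simp add: doubleton_eq_iff)
    ultimately show ?thesis by simp
  qed
  obtain E2 where E2: "tt_graph n m E2 s t" "stronger 3 m E2 s t ?E1 s t"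
    using C2[OF conjunct1[OF W] _ m5 _ tw1 w(3)] fin by auto
  then show ?thesis using stronger_weak conjunct2[OF W] by blast
qed

lemma twins_I:
  assumes stE: "{s,t} \<in> E" and tw: "\<And>v. v \<noteq> s \<Longrightarrow> v \<noteq> t \<Longrightarrow> {s,v} \<in> E \<longleftrightarrow> {t,v} \<in> E"
  shows "true_twins E s t"
  unfolding true_twins_def closed_nbhd_def
proof (rule set_eqI)
  fix u
  show "u \<in> insert s {v. {s, v} \<in> E} \<longleftrightarrow> u \<in> insert t {v. {t, v} \<in> E}"
  proof (cases "u = s \<or> u = t")
    case True
    then show ?thesis using stE by (auto simp: insert_commute)
  next
    case False
    then show ?thesis using tw[of u] by auto
  qed
qed

lemma irr_P3:
  assumes st: "s \<noteq> t" and "irrelevant 3 E s t e"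
  shows "\<And>F. F \<subseteq> E \<Longrightarrow> P3 F s t \<Longrightarrow> P3 (F - {e}) s t"
proof -
  fix F assume F: "F \<subseteq> E" "P3 F s t"
  show "P3 (F - {e}) s t"
  proof (cases "e \<in> F")
    case True
    then show ?thesis using assms(2) F unfolding irrelevant_def using pathset_P3[OF st] by blast
  next
    case False
    then show ?thesis using F by simp
  qed
qed

lemma step:
  assumes tt: "tt_graph n m E s t" and m5: "m \<ge> 5" and nt: "\<not> in_Tstar E s t"
  shows "\<exists>E1. tt_graph n m E1 s t \<and> stronger 3 m E1 s t E s t"
proof -
  have fin: "finite E" using tt_fin[OF tt] m5 by simp
  have st: "s \<noteq> t" and sn: "s < n" and tn: "t < n" using tt_st[OF tt] by auto
  show ?thesis
  proof (cases "{s,t} \<in> E")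
    case False
    have "card E = m" using tt unfolding tt_graph_def by simp
    then have "E \<noteq> {}" using m5 by auto
    then obtain e where e: "e \<in> E" by blast
    have cond: "P3 (insert {s,t} (F - {e})) s t" for F by (rule P3_I1) simp
    have F03: "\<not> P3 {e} s t" using P3_single[OF st] e False by blast
    have F04: "P3 (insert {s,t} ({e} - {e})) s t" by (rule P3_I1) simp
    show ?thesis using RLs[OF tt fin e False refl st sn tn cond _ _ F03 F04] e by blast
  next
    case stE: True
    show ?thesis
    proof (cases "\<exists>v. v \<noteq> t \<and> {s,v} \<in> E \<and> {t,v} \<notin> E")
      case True
      then obtain v where "v \<noteq> t" "{s,v} \<in> E" "{t,v} \<notin> E" by blast
      then show ?thesis using C2[OF tt fin m5] by blast
    next
      case F1: False
      show ?thesis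
      proof (cases "\<exists>v. v \<noteq> s \<and> {t,v} \<in> E \<and> {s,v} \<notin> E")
        case True
        then obtain v where "v \<noteq> s" "{t,v} \<in> E" "{s,v} \<notin> E" by blast
        then show ?thesis using C2sym[OF tt fin m5] by blast
      next
        case F2: False
        have tw: "\<And>v. v \<noteq> s \<Longrightarrow> v \<noteq> t \<Longrightarrow> {s,v} \<in> E \<longleftrightarrow> {t,v} \<in> E" using F1 F2 by blast
        have "true_twins E s t" by (rule twins_I[OF stE tw])
        then obtain e where e: "e \<in> E" "irrelevant 3 E s t e" using nt unfolding in_Tstar_def by blast
        show ?thesis by (rule C3[OF tt fin m5 stE tw e(1) irr_P3[OF st e(2)]])
      qed
    qed
  qed
qed



definition mu :: "nat \<Rightarrow> nat set set \<Rightarrow> nat \<Rightarrow> nat \<Rightarrow> nat" where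
  "mu m E s t = (\<Sum>i\<in>{1..m}. Nid 3 i E s t)"

lemma mu_bound:
  assumes tt: "tt_graph n m E s t" and m5: "m \<ge> 5"
  shows "mu m E s t \<le> m * 2 ^ m"
proof -
  have fin: "finite E" using tt_fin[OF tt] m5 by simp
  have cE: "card E = m" using tt unfolding tt_graph_def by simp
  have "Nid 3 i E s t \<le> 2 ^ m" for i
  proof -
    have "{F. F \<subseteq> E \<and> card F = i \<and> pathset 3 F s t} \<subseteq> Pow E" by blast
    then have "Nid 3 i E s t \<le> card (Pow E)" unfolding Nid_def using fin by (intro card_mono) auto
    then show ?thesis using card_Pow[of E] cE fin by simp
  qed
  then have "mu m E s t \<le> of_nat (card {1..m}) * 2 ^ m" unfolding mu_def
    by (intro sum_bounded_above)
  then show ?thesis by simp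
qed

lemma mu_less:
  assumes "stronger 3 m E1 s t E s t"
  shows "mu m E s t < mu m E1 s t"
  unfolding mu_def
  by (rule sum_strict_mono_ex1) (use assms in \<open>auto simp: stronger_def\<close>)

lemma main:
  assumes m5: "m \<ge> 5"
  shows "tt_graph n m E s t \<Longrightarrow> \<not> in_Tstar E s t \<Longrightarrow>
    \<exists>E'. tt_graph n m E' s t \<and> in_Tstar E' s t \<and> stronger 3 m E' s t E s t"
proof (induction "m * 2 ^ m - mu m E s t" arbitrary: E rule: less_induct)
  case less
  obtain E1 where E1: "tt_graph n m E1 s t" "stronger 3 m E1 s t E s t"
    using step[OF less.prems(1) m5 less.prems(2)] by blast
  show ?case
  proof (cases "in_Tstar E1 s t")
    case True
    then show ?thesis using E1 by blast
  next
    case False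
    have "mu m E s t < mu m E1 s t" by (rule mu_less[OF E1(2)])
    moreover have "mu m E1 s t \<le> m * 2 ^ m" by (rule mu_bound[OF E1(1) m5])
    ultimately have "m * 2 ^ m - mu m E1 s t < m * 2 ^ m - mu m E s t" by linarith
    then obtain E' where "tt_graph n m E' s t" "in_Tstar E' s t" "stronger 3 m E' s t E1 s t"
      using less.hyps E1(1) False by blast
    then show ?thesis using stronger_trans E1(2) by blast
  qed
qed

theorem lemma10:
  fixes n m :: nat and E :: "nat set set" and s t :: nat
  assumes "n \<ge> 5" and "m \<ge> 5"
    and "tt_graph n m E s t"
    and "\<not> in_Tstar E s t"
  shows "\<exists>E' s' t'. tt_graph n m E' s' t' \<and> in_Tstar E' s' t' \<and> stronger 3 m E' s' t' E s t"
  using main[OF assms(2) assms(3) assms(4)] by blast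


end
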